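(* Let $m,v,x,s>0$ and $u,w\in\mathbb{R}$ with $w\geq 0$. Let $\mathfrak{n}$ be the five-dimensional real Lie algebra with basis $\{E_1,\dots,E_5\}$ whose only non-vanishing brackets (up to antisymmetry) are $$[E_1,E_2]=mE_3+sE_4+uE_5,\qquad [E_1,E_3]=vE_4+wE_5,\qquad [E_1,E_4]=xE_5.$$ Equip the corresponding simply connected nilpotent Lie group with the left-invariant Riemannian metric for which $\{E_1,\dots,E_5\}$ is orthonormal. Then this metric is not an algebraic Ricci soliton.
   Context: Let $G$ be a Lie group with Lie algebra $\mathfrak{g}$ and let $g$ be a left-invariant Riemannian metric on $G$. Let $\mathrm{Ric}$ denote the $(1,1)$ Ricci tensor of $g$, viewed as a linear endomorphism of $\mathfrak{g}$. The metric $g$ is an algebraic Ricci soliton if there are a real number $c$ and a derivation $D$ of $\mathfrak{g}$ such that $\mathrm{Ric}=c\,\mathrm{Id}+D$. *)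

theory Defs
  imports "HOL-Analysis.Analysis" "HOL-Library.Numeral_Type"
begin

text \<open>A real Lie algebra on R^n given by structure constants with respect to the
standard basis: C i j k is the coefficient of e_k in [e_i, e_j]. The left-invariant
metric is the one for which the standard basis is orthonormal, i.e. the standard
inner product.\<close>

definition lie_br :: "('n::finite \<Rightarrow> 'n \<Rightarrow> 'n \<Rightarrow> real) \<Rightarrow> real^'n \<Rightarrow> real^'n \<Rightarrow> real^'n" where
  "lie_br C X Y = (\<chi> k. \<Sum>i\<in>UNIV. \<Sum>j\<in>UNIV. X$i * Y$j * C i j k)"

definition ebas :: "'n::finite \<Rightarrow> real^'n" where
  "ebas i = axis i 1"

text \<open>Levi-Civita connection on left-invariant fields (Koszul formula):
 2 <nabla_X Y, Z> = <[X,Y],Z> - <[Y,Z],X> + <[Z,X],Y>.\<close>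
definition lc_conn :: "('n::finite \<Rightarrow> 'n \<Rightarrow> 'n \<Rightarrow> real) \<Rightarrow> real^'n \<Rightarrow> real^'n \<Rightarrow> real^'n" where
  "lc_conn C X Y = (\<Sum>k\<in>UNIV. ((1/2) * (inner (lie_br C X Y) (ebas k)
        - inner (lie_br C Y (ebas k)) X + inner (lie_br C (ebas k) X) Y)) *\<^sub>R ebas k)"

definition riem :: "('n::finite \<Rightarrow> 'n \<Rightarrow> 'n \<Rightarrow> real) \<Rightarrow> real^'n \<Rightarrow> real^'n \<Rightarrow> real^'n \<Rightarrow> real^'n" where
  "riem C X Y Z = lc_conn C X (lc_conn C Y Z) - lc_conn C Y (lc_conn C X Z)
                  - lc_conn C (lie_br C X Y) Z"

definition ric :: "('n::finite \<Rightarrow> 'n \<Rightarrow> 'n \<Rightarrow> real) \<Rightarrow> real^'n \<Rightarrow> real^'n \<Rightarrow> real" where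
  "ric C X Y = (\<Sum>i\<in>UNIV. inner (riem C (ebas i) X Y) (ebas i))"

definition Ric_op :: "('n::finite \<Rightarrow> 'n \<Rightarrow> 'n \<Rightarrow> real) \<Rightarrow> real^'n \<Rightarrow> real^'n" where
  "Ric_op C X = (\<Sum>j\<in>UNIV. ric C X (ebas j) *\<^sub>R ebas j)"

definition is_derivation :: "('n::finite \<Rightarrow> 'n \<Rightarrow> 'n \<Rightarrow> real) \<Rightarrow> (real^'n \<Rightarrow> real^'n) \<Rightarrow> bool" where
  "is_derivation C D \<longleftrightarrow> linear D \<and>
     (\<forall>X Y. D (lie_br C X Y) = lie_br C (D X) Y + lie_br C X (D Y))"

definition algebraic_ricci_soliton :: "('n::finite \<Rightarrow> 'n \<Rightarrow> 'n \<Rightarrow> real) \<Rightarrow> bool" where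
  "algebraic_ricci_soliton C \<longleftrightarrow>
     (\<exists>c D. is_derivation C D \<and> (\<forall>X. Ric_op C X = c *\<^sub>R X + D X))"

text \<open>The five-dimensional algebra: basis E_1..E_5 are the elements 1,2,3,4,5 of type 5
(5 = 0 in this type; the five are distinct).\<close>
definition n5_const :: "real \<Rightarrow> real \<Rightarrow> real \<Rightarrow> real \<Rightarrow> real \<Rightarrow> real \<Rightarrow> 5 \<Rightarrow> 5 \<Rightarrow> 5 \<Rightarrow> real" where
  "n5_const m v x s u w i j k =
    (if (i,j) = (1,2) then (if k = 3 then m else if k = 4 then s else if k = 5 then u else 0)
     else if (i,j) = (2,1) then (if k = 3 then -m else if k = 4 then -s else if k = 5 then -u else 0)
     else if (i,j) = (1,3) then (if k = 4 then v else if k = 5 then w else 0)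
     else if (i,j) = (3,1) then (if k = 4 then -v else if k = 5 then -w else 0)
     else if (i,j) = (1,4) then (if k = 5 then x else 0)
     else if (i,j) = (4,1) then (if k = 5 then -x else 0)
     else 0)"

end

theory Submission
  imports Defs
begin

lemma U5: "(UNIV::5 set) = {1,2,3,4,5}"
proof -
  have "\<And>i::5. i \<in> {1,2,3,4,5}"
  proof -
    fix i :: 5
    show "i \<in> {1,2,3,4,5}"
    proof (cases i rule: bit1_cases)
      case (of_int z)
      have "z < 5" using of_int by simp
      then have "z = 0 \<or> z = 1 \<or> z = 2 \<or> z = 3 \<or> z = 4" using of_int by linarith
      then show ?thesis using of_int by (elim disjE) simp_all
    qed
  qed
  thus ?thesis by auto
qed
lemma d5: "(1::5) \<notin> {2,3,4,5}" "(2::5) \<notin> {3,4,5}" "(3::5) \<notin> {4,5}" "(4::5) \<notin> {5}"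
  by simp_all
lemma f5: "finite {2,3,4,5::5}" "finite {3,4,5::5}" "finite {4,5::5}" "finite {5::5}"
  by simp_all
lemma sum5: "sum f (UNIV::5 set) = f 1 + f 2 + f 3 + f 4 + f 5"
proof -
  have "sum f (UNIV::5 set) = f 1 + (f 2 + (f 3 + (f 4 + f 5)))"
    unfolding U5
    by (simp only: sum.insert[OF f5(1) d5(1)] sum.insert[OF f5(2) d5(2)]
          sum.insert[OF f5(3) d5(3)] sum.insert[OF f5(4) d5(4)] sum.insert_if finite.emptyI empty_iff if_False sum.empty add_0_right)
  then show ?thesis by (simp only: add.assoc)
qed
lemma inner_ebas: "inner v (ebas k) = v $ k" "inner (ebas k) v = v $ k"
  by (simp_all add: ebas_def inner_axis inner_commute)

lemma ebas_comp: "ebas k $ j = (if j = k then 1 else 0)"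
  by (simp add: ebas_def axis_def)

lemma lc_comp: "lc_conn C X Y $ k = (1/2) * (lie_br C X Y $ k - inner (lie_br C Y (ebas k)) X + inner (lie_br C (ebas k) X) Y)"
  unfolding lc_conn_def
  by (simp add: sum_component ebas_comp inner_ebas if_distrib[of "\<lambda>t. _ * t"] cong: if_cong)

lemma ric_comp: "ric C X Y = (\<Sum>i\<in>UNIV. riem C (ebas i) X Y $ i)"
  by (simp add: ric_def inner_ebas)

lemma Ric_comp: "Ric_op C X $ j = ric C X (ebas j)"
  unfolding Ric_op_def
  by (simp add: sum_component ebas_comp inner_ebas if_distrib[of "\<lambda>t. _ * t"] cong: if_cong)

lemma inner5: "inner (a::real^5) b = a$1*b$1 + a$2*b$2 + a$3*b$3 + a$4*b$4 + a$5*b$5"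
  by (simp add: inner_vec_def sum5)

lemma n5_tab:
  "n5_const m v x s u w 1 1 1 = 0"
  "n5_const m v x s u w 1 1 2 = 0"
  "n5_const m v x s u w 1 1 3 = 0"
  "n5_const m v x s u w 1 1 4 = 0"
  "n5_const m v x s u w 1 1 5 = 0"
  "n5_const m v x s u w 1 2 1 = 0"
  "n5_const m v x s u w 1 2 2 = 0"
  "n5_const m v x s u w 1 2 3 = m"
  "n5_const m v x s u w 1 2 4 = s"
  "n5_const m v x s u w 1 2 5 = u"
  "n5_const m v x s u w 1 3 1 = 0"
  "n5_const m v x s u w 1 3 2 = 0"
  "n5_const m v x s u w 1 3 3 = 0"
  "n5_const m v x s u w 1 3 4 = v"
  "n5_const m v x s u w 1 3 5 = w"
  "n5_const m v x s u w 1 4 1 = 0"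
  "n5_const m v x s u w 1 4 2 = 0"
  "n5_const m v x s u w 1 4 3 = 0"
  "n5_const m v x s u w 1 4 4 = 0"
  "n5_const m v x s u w 1 4 5 = x"
  "n5_const m v x s u w 1 5 1 = 0"
  "n5_const m v x s u w 1 5 2 = 0"
  "n5_const m v x s u w 1 5 3 = 0"
  "n5_const m v x s u w 1 5 4 = 0"
  "n5_const m v x s u w 1 5 5 = 0"
  "n5_const m v x s u w 2 1 1 = 0"
  "n5_const m v x s u w 2 1 2 = 0"
  "n5_const m v x s u w 2 1 3 = - m"
  "n5_const m v x s u w 2 1 4 = - s"
  "n5_const m v x s u w 2 1 5 = - u"
  "n5_const m v x s u w 2 2 1 = 0"
  "n5_const m v x s u w 2 2 2 = 0"
  "n5_const m v x s u w 2 2 3 = 0"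
  "n5_const m v x s u w 2 2 4 = 0"
  "n5_const m v x s u w 2 2 5 = 0"
  "n5_const m v x s u w 2 3 1 = 0"
  "n5_const m v x s u w 2 3 2 = 0"
  "n5_const m v x s u w 2 3 3 = 0"
  "n5_const m v x s u w 2 3 4 = 0"
  "n5_const m v x s u w 2 3 5 = 0"
  "n5_const m v x s u w 2 4 1 = 0"
  "n5_const m v x s u w 2 4 2 = 0"
  "n5_const m v x s u w 2 4 3 = 0"
  "n5_const m v x s u w 2 4 4 = 0"
  "n5_const m v x s u w 2 4 5 = 0"
  "n5_const m v x s u w 2 5 1 = 0"
  "n5_const m v x s u w 2 5 2 = 0"
  "n5_const m v x s u w 2 5 3 = 0"
  "n5_const m v x s u w 2 5 4 = 0"
  "n5_const m v x s u w 2 5 5 = 0"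
  "n5_const m v x s u w 3 1 1 = 0"
  "n5_const m v x s u w 3 1 2 = 0"
  "n5_const m v x s u w 3 1 3 = 0"
  "n5_const m v x s u w 3 1 4 = - v"
  "n5_const m v x s u w 3 1 5 = - w"
  "n5_const m v x s u w 3 2 1 = 0"
  "n5_const m v x s u w 3 2 2 = 0"
  "n5_const m v x s u w 3 2 3 = 0"
  "n5_const m v x s u w 3 2 4 = 0"
  "n5_const m v x s u w 3 2 5 = 0"
  "n5_const m v x s u w 3 3 1 = 0"
  "n5_const m v x s u w 3 3 2 = 0"
  "n5_const m v x s u w 3 3 3 = 0"
  "n5_const m v x s u w 3 3 4 = 0"
  "n5_const m v x s u w 3 3 5 = 0"
  "n5_const m v x s u w 3 4 1 = 0"
  "n5_const m v x s u w 3 4 2 = 0"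
  "n5_const m v x s u w 3 4 3 = 0"
  "n5_const m v x s u w 3 4 4 = 0"
  "n5_const m v x s u w 3 4 5 = 0"
  "n5_const m v x s u w 3 5 1 = 0"
  "n5_const m v x s u w 3 5 2 = 0"
  "n5_const m v x s u w 3 5 3 = 0"
  "n5_const m v x s u w 3 5 4 = 0"
  "n5_const m v x s u w 3 5 5 = 0"
  "n5_const m v x s u w 4 1 1 = 0"
  "n5_const m v x s u w 4 1 2 = 0"
  "n5_const m v x s u w 4 1 3 = 0"
  "n5_const m v x s u w 4 1 4 = 0"
  "n5_const m v x s u w 4 1 5 = - x"
  "n5_const m v x s u w 4 2 1 = 0"
  "n5_const m v x s u w 4 2 2 = 0"
  "n5_const m v x s u w 4 2 3 = 0"
  "n5_const m v x s u w 4 2 4 = 0"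
  "n5_const m v x s u w 4 2 5 = 0"
  "n5_const m v x s u w 4 3 1 = 0"
  "n5_const m v x s u w 4 3 2 = 0"
  "n5_const m v x s u w 4 3 3 = 0"
  "n5_const m v x s u w 4 3 4 = 0"
  "n5_const m v x s u w 4 3 5 = 0"
  "n5_const m v x s u w 4 4 1 = 0"
  "n5_const m v x s u w 4 4 2 = 0"
  "n5_const m v x s u w 4 4 3 = 0"
  "n5_const m v x s u w 4 4 4 = 0"
  "n5_const m v x s u w 4 4 5 = 0"
  "n5_const m v x s u w 4 5 1 = 0"
  "n5_const m v x s u w 4 5 2 = 0"
  "n5_const m v x s u w 4 5 3 = 0"
  "n5_const m v x s u w 4 5 4 = 0"
  "n5_const m v x s u w 4 5 5 = 0"
  "n5_const m v x s u w 5 1 1 = 0"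
  "n5_const m v x s u w 5 1 2 = 0"
  "n5_const m v x s u w 5 1 3 = 0"
  "n5_const m v x s u w 5 1 4 = 0"
  "n5_const m v x s u w 5 1 5 = 0"
  "n5_const m v x s u w 5 2 1 = 0"
  "n5_const m v x s u w 5 2 2 = 0"
  "n5_const m v x s u w 5 2 3 = 0"
  "n5_const m v x s u w 5 2 4 = 0"
  "n5_const m v x s u w 5 2 5 = 0"
  "n5_const m v x s u w 5 3 1 = 0"
  "n5_const m v x s u w 5 3 2 = 0"
  "n5_const m v x s u w 5 3 3 = 0"
  "n5_const m v x s u w 5 3 4 = 0"
  "n5_const m v x s u w 5 3 5 = 0"
  "n5_const m v x s u w 5 4 1 = 0"
  "n5_const m v x s u w 5 4 2 = 0"
  "n5_const m v x s u w 5 4 3 = 0"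
  "n5_const m v x s u w 5 4 4 = 0"
  "n5_const m v x s u w 5 4 5 = 0"
  "n5_const m v x s u w 5 5 1 = 0"
  "n5_const m v x s u w 5 5 2 = 0"
  "n5_const m v x s u w 5 5 3 = 0"
  "n5_const m v x s u w 5 5 4 = 0"
  "n5_const m v x s u w 5 5 5 = 0"
  by (simp_all add: n5_const_def)

lemma br_comp:
  "lie_br (n5_const m v x s u w) P Q $ 1 = 0"
  "lie_br (n5_const m v x s u w) P Q $ 2 = 0"
  "lie_br (n5_const m v x s u w) P Q $ 3 = (P $ 1*Q $ 2 - P $ 2*Q $ 1) * m"
  "lie_br (n5_const m v x s u w) P Q $ 4 = (P $ 1*Q $ 2 - P $ 2*Q $ 1) * s + (P $ 1*Q $ 3 - P $ 3*Q $ 1) * v"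
  "lie_br (n5_const m v x s u w) P Q $ 5 = (P $ 1*Q $ 2 - P $ 2*Q $ 1) * u + (P $ 1*Q $ 3 - P $ 3*Q $ 1) * w + (P $ 1*Q $ 4 - P $ 4*Q $ 1) * x"
  unfolding lie_br_def vec_lambda_beta by (simp only: sum5 n5_tab; simp add: algebra_simps)+


lemma forall5: "(\<forall>i::5. P i) \<longleftrightarrow> P 1 \<and> P 2 \<and> P 3 \<and> P 4 \<and> P 5"
proof
  assume H: "P 1 \<and> P 2 \<and> P 3 \<and> P 4 \<and> P 5"
  show "\<forall>i. P i"
  proof
    fix i :: 5
    have "i \<in> {1,2,3,4,5}" using U5 by blast
    then show "P i" using H by blast
  qed
qed simp

lemma lc_11: "lc_conn (n5_const m v x s u w) (ebas 1) (ebas 1) = 0"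
  by (simp add: vec_eq_iff forall5 lc_comp br_comp inner5 ebas_comp algebra_simps)

lemma lc_12: "lc_conn (n5_const m v x s u w) (ebas 1) (ebas 2) = ((1/2) * m) *\<^sub>R ebas 3 + ((1/2) * s) *\<^sub>R ebas 4 + ((1/2) * u) *\<^sub>R ebas 5"
  by (simp add: vec_eq_iff forall5 lc_comp br_comp inner5 ebas_comp algebra_simps)

lemma lc_13: "lc_conn (n5_const m v x s u w) (ebas 1) (ebas 3) = ((- 1/2) * m) *\<^sub>R ebas 2 + ((1/2) * v) *\<^sub>R ebas 4 + ((1/2) * w) *\<^sub>R ebas 5"
  by (simp add: vec_eq_iff forall5 lc_comp br_comp inner5 ebas_comp algebra_simps)

lemma lc_14: "lc_conn (n5_const m v x s u w) (ebas 1) (ebas 4) = ((- 1/2) * s) *\<^sub>R ebas 2 + ((- 1/2) * v) *\<^sub>R ebas 3 + ((1/2) * x) *\<^sub>R ebas 5"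
  by (simp add: vec_eq_iff forall5 lc_comp br_comp inner5 ebas_comp algebra_simps)

lemma lc_15: "lc_conn (n5_const m v x s u w) (ebas 1) (ebas 5) = ((- 1/2) * u) *\<^sub>R ebas 2 + ((- 1/2) * w) *\<^sub>R ebas 3 + ((- 1/2) * x) *\<^sub>R ebas 4"
  by (simp add: vec_eq_iff forall5 lc_comp br_comp inner5 ebas_comp algebra_simps)

lemma lc_21: "lc_conn (n5_const m v x s u w) (ebas 2) (ebas 1) = ((- 1/2) * m) *\<^sub>R ebas 3 + ((- 1/2) * s) *\<^sub>R ebas 4 + ((- 1/2) * u) *\<^sub>R ebas 5"
  by (simp add: vec_eq_iff forall5 lc_comp br_comp inner5 ebas_comp algebra_simps)

lemma lc_22: "lc_conn (n5_const m v x s u w) (ebas 2) (ebas 2) = 0"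
  by (simp add: vec_eq_iff forall5 lc_comp br_comp inner5 ebas_comp algebra_simps)

lemma lc_23: "lc_conn (n5_const m v x s u w) (ebas 2) (ebas 3) = ((1/2) * m) *\<^sub>R ebas 1"
  by (simp add: vec_eq_iff forall5 lc_comp br_comp inner5 ebas_comp algebra_simps)

lemma lc_24: "lc_conn (n5_const m v x s u w) (ebas 2) (ebas 4) = ((1/2) * s) *\<^sub>R ebas 1"
  by (simp add: vec_eq_iff forall5 lc_comp br_comp inner5 ebas_comp algebra_simps)

lemma lc_25: "lc_conn (n5_const m v x s u w) (ebas 2) (ebas 5) = ((1/2) * u) *\<^sub>R ebas 1"
  by (simp add: vec_eq_iff forall5 lc_comp br_comp inner5 ebas_comp algebra_simps)

lemma lc_31: "lc_conn (n5_const m v x s u w) (ebas 3) (ebas 1) = ((- 1/2) * m) *\<^sub>R ebas 2 + ((- 1/2) * v) *\<^sub>R ebas 4 + ((- 1/2) * w) *\<^sub>R ebas 5"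
  by (simp add: vec_eq_iff forall5 lc_comp br_comp inner5 ebas_comp algebra_simps)

lemma lc_32: "lc_conn (n5_const m v x s u w) (ebas 3) (ebas 2) = ((1/2) * m) *\<^sub>R ebas 1"
  by (simp add: vec_eq_iff forall5 lc_comp br_comp inner5 ebas_comp algebra_simps)

lemma lc_33: "lc_conn (n5_const m v x s u w) (ebas 3) (ebas 3) = 0"
  by (simp add: vec_eq_iff forall5 lc_comp br_comp inner5 ebas_comp algebra_simps)

lemma lc_34: "lc_conn (n5_const m v x s u w) (ebas 3) (ebas 4) = ((1/2) * v) *\<^sub>R ebas 1"
  by (simp add: vec_eq_iff forall5 lc_comp br_comp inner5 ebas_comp algebra_simps)

lemma lc_35: "lc_conn (n5_const m v x s u w) (ebas 3) (ebas 5) = ((1/2) * w) *\<^sub>R ebas 1"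
  by (simp add: vec_eq_iff forall5 lc_comp br_comp inner5 ebas_comp algebra_simps)

lemma lc_41: "lc_conn (n5_const m v x s u w) (ebas 4) (ebas 1) = ((- 1/2) * s) *\<^sub>R ebas 2 + ((- 1/2) * v) *\<^sub>R ebas 3 + ((- 1/2) * x) *\<^sub>R ebas 5"
  by (simp add: vec_eq_iff forall5 lc_comp br_comp inner5 ebas_comp algebra_simps)

lemma lc_42: "lc_conn (n5_const m v x s u w) (ebas 4) (ebas 2) = ((1/2) * s) *\<^sub>R ebas 1"
  by (simp add: vec_eq_iff forall5 lc_comp br_comp inner5 ebas_comp algebra_simps)

lemma lc_43: "lc_conn (n5_const m v x s u w) (ebas 4) (ebas 3) = ((1/2) * v) *\<^sub>R ebas 1"
  by (simp add: vec_eq_iff forall5 lc_comp br_comp inner5 ebas_comp algebra_simps)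

lemma lc_44: "lc_conn (n5_const m v x s u w) (ebas 4) (ebas 4) = 0"
  by (simp add: vec_eq_iff forall5 lc_comp br_comp inner5 ebas_comp algebra_simps)

lemma lc_45: "lc_conn (n5_const m v x s u w) (ebas 4) (ebas 5) = ((1/2) * x) *\<^sub>R ebas 1"
  by (simp add: vec_eq_iff forall5 lc_comp br_comp inner5 ebas_comp algebra_simps)

lemma lc_51: "lc_conn (n5_const m v x s u w) (ebas 5) (ebas 1) = ((- 1/2) * u) *\<^sub>R ebas 2 + ((- 1/2) * w) *\<^sub>R ebas 3 + ((- 1/2) * x) *\<^sub>R ebas 4"
  by (simp add: vec_eq_iff forall5 lc_comp br_comp inner5 ebas_comp algebra_simps)

lemma lc_52: "lc_conn (n5_const m v x s u w) (ebas 5) (ebas 2) = ((1/2) * u) *\<^sub>R ebas 1"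
  by (simp add: vec_eq_iff forall5 lc_comp br_comp inner5 ebas_comp algebra_simps)

lemma lc_53: "lc_conn (n5_const m v x s u w) (ebas 5) (ebas 3) = ((1/2) * w) *\<^sub>R ebas 1"
  by (simp add: vec_eq_iff forall5 lc_comp br_comp inner5 ebas_comp algebra_simps)

lemma lc_54: "lc_conn (n5_const m v x s u w) (ebas 5) (ebas 4) = ((1/2) * x) *\<^sub>R ebas 1"
  by (simp add: vec_eq_iff forall5 lc_comp br_comp inner5 ebas_comp algebra_simps)

lemma lc_55: "lc_conn (n5_const m v x s u w) (ebas 5) (ebas 5) = 0"
  by (simp add: vec_eq_iff forall5 lc_comp br_comp inner5 ebas_comp algebra_simps)

lemmas lcs = lc_11 lc_12 lc_13 lc_14 lc_15 lc_21 lc_22 lc_23 lc_24 lc_25 lc_31 lc_32 lc_33 lc_34 lc_35 lc_41 lc_42 lc_43 lc_44 lc_45 lc_51 lc_52 lc_53 lc_54 lc_55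

lemma ric_53: "ric (n5_const m v x s u w) (ebas 5) (ebas 3) = m * u / 2"
  by (simp add: ric_comp sum5 riem_def lcs lc_comp br_comp inner5 ebas_comp algebra_simps; simp add: field_simps)

lemma ric_42: "ric (n5_const m v x s u w) (ebas 4) (ebas 2) = - u * x / 2"
  by (simp add: ric_comp sum5 riem_def lcs lc_comp br_comp inner5 ebas_comp algebra_simps; simp add: field_simps)

lemma ric_43: "ric (n5_const m v x s u w) (ebas 4) (ebas 3) = (m * s - w * x) / 2"
  by (simp add: ric_comp sum5 riem_def lcs lc_comp br_comp inner5 ebas_comp algebra_simps; simp add: field_simps)

lemma ric_32: "ric (n5_const m v x s u w) (ebas 3) (ebas 2) = - (s * v + u * w) / 2"
  by (simp add: ric_comp sum5 riem_def lcs lc_comp br_comp inner5 ebas_comp algebra_simps; simp add: field_simps)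

lemma ric_35: "ric (n5_const m v x s u w) (ebas 3) (ebas 5) = m * u / 2"
  by (simp add: ric_comp sum5 riem_def lcs lc_comp br_comp inner5 ebas_comp algebra_simps; simp add: field_simps)

lemma ric_45: "ric (n5_const m v x s u w) (ebas 4) (ebas 5) = (s * u + v * w) / 2"
  by (simp add: ric_comp sum5 riem_def lcs lc_comp br_comp inner5 ebas_comp algebra_simps; simp add: field_simps)

lemma ric_55: "ric (n5_const m v x s u w) (ebas 5) (ebas 5) = (u * u + w * w + x * x) / 2"
  by (simp add: ric_comp sum5 riem_def lcs lc_comp br_comp inner5 ebas_comp algebra_simps; simp add: field_simps)

lemma ric_11: "ric (n5_const m v x s u w) (ebas 1) (ebas 1) = - (m * m + s * s + u * u + v * v + w * w + x * x) / 2"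
  by (simp add: ric_comp sum5 riem_def lcs lc_comp br_comp inner5 ebas_comp algebra_simps; simp add: field_simps)

lemma ric_22: "ric (n5_const m v x s u w) (ebas 2) (ebas 2) = - (m * m + s * s + u * u) / 2"
  by (simp add: ric_comp sum5 riem_def lcs lc_comp br_comp inner5 ebas_comp algebra_simps; simp add: field_simps)

lemma ric_23: "ric (n5_const m v x s u w) (ebas 2) (ebas 3) = - (s * v + u * w) / 2"
  by (simp add: ric_comp sum5 riem_def lcs lc_comp br_comp inner5 ebas_comp algebra_simps; simp add: field_simps)

lemma ric_24: "ric (n5_const m v x s u w) (ebas 2) (ebas 4) = - u * x / 2"
  by (simp add: ric_comp sum5 riem_def lcs lc_comp br_comp inner5 ebas_comp algebra_simps; simp add: field_simps)

lemma br12: "lie_br (n5_const m v x s u w) (ebas 1) (ebas 2) = m *\<^sub>R ebas 3 + s *\<^sub>R ebas 4 + u *\<^sub>R ebas 5"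
  by (simp add: vec_eq_iff forall5 br_comp ebas_comp)
lemma br13: "lie_br (n5_const m v x s u w) (ebas 1) (ebas 3) = v *\<^sub>R ebas 4 + w *\<^sub>R ebas 5"
  by (simp add: vec_eq_iff forall5 br_comp ebas_comp)
lemma br14: "lie_br (n5_const m v x s u w) (ebas 1) (ebas 4) = x *\<^sub>R ebas 5"
  by (simp add: vec_eq_iff forall5 br_comp ebas_comp)

lemmas rics = ric_53 ric_42 ric_43 ric_32 ric_35 ric_45 ric_55 ric_11 ric_22 ric_23 ric_24

theorem mainTheorem5:
  fixes m v x s u w :: real
  assumes "m > 0" "v > 0" "x > 0" "s > 0" "w \<ge> 0"
  shows "\<not> algebraic_ricci_soliton (n5_const m v x s u w)"
proof
  let ?C = "n5_const m v x s u w"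
  assume "algebraic_ricci_soliton ?C"
  then obtain c D where der: "is_derivation ?C D" and RD: "\<And>X. Ric_op ?C X = c *\<^sub>R X + D X"
    unfolding algebraic_ricci_soliton_def by blast
  have lin: "linear D" and br: "\<And>X Y. D (lie_br ?C X Y) = lie_br ?C (D X) Y + lie_br ?C X (D Y)"
    using der unfolding is_derivation_def by blast+
  have Dk: "\<And>i k. D (ebas i) $ k = ric ?C (ebas i) (ebas k) - c * (ebas i $ k)"
  proof -
    fix i k
    have "D (ebas i) = Ric_op ?C (ebas i) - c *\<^sub>R ebas i" using RD[of "ebas i"] by simp
    then show "D (ebas i) $ k = ric ?C (ebas i) (ebas k) - c * (ebas i $ k)" by (simp add: Ric_comp)
  qed
  have e1: "x * D (ebas 5) $ 3 = (lie_br ?C (D (ebas 1)) (ebas 4) + lie_br ?C (ebas 1) (D (ebas 4))) $ 3"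
    using arg_cong[where f="\<lambda>v. v $ 3", OF br[of "ebas 1" "ebas 4"]] unfolding br14 linear_scale[OF lin] by simp
  then have q1: "x * (m * u / 2) = m * (- u * x / 2)"
    by (simp add: Dk br_comp ebas_comp rics)
  then have "m * u * x = 0" by (simp add: algebra_simps)
  then have u0: "u = 0" using assms by simp
  have e2: "v * D (ebas 4) $ 3 + w * D (ebas 5) $ 3 = (lie_br ?C (D (ebas 1)) (ebas 3) + lie_br ?C (ebas 1) (D (ebas 3))) $ 3"
    using arg_cong[where f="\<lambda>v. v $ 3", OF br[of "ebas 1" "ebas 3"]] unfolding br13 linear_add[OF lin] linear_scale[OF lin] by simp
  then have q2: "v * ((m * s - w * x) / 2) + w * (m * u / 2) = m * (- (s * v + u * w) / 2)"
    by (simp add: Dk br_comp ebas_comp rics)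
  from q2 u0 have "v * (2 * m * s - w * x) = 0" by (simp add: algebra_simps)
  then have wx: "w * x = 2 * m * s" using assms by simp
  have "w \<noteq> 0"
  proof
    assume "w = 0"
    then show False using wx assms by simp
  qed
  then have wpos: "w > 0" using assms by simp
  have e3: "m * D (ebas 3) $ 5 + s * D (ebas 4) $ 5 + u * D (ebas 5) $ 5 = (lie_br ?C (D (ebas 1)) (ebas 2) + lie_br ?C (ebas 1) (D (ebas 2))) $ 5"
    using arg_cong[where f="\<lambda>v. v $ 5", OF br[of "ebas 1" "ebas 2"]] unfolding br12 linear_add[OF lin] linear_scale[OF lin] by simp
  then have "s * ((s * u + v * w) / 2) = w * (- (s * v + u * w) / 2) + x * (- u * x / 2)"
    using u0 by (simp add: Dk br_comp ebas_comp rics)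
  then have "s * v * w = 0" using u0 by (simp add: algebra_simps)
  then show False using assms wpos by simp
qed
end
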